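(* Let $p\neq 2$ and $q\neq 2$ be primes and let $\lambda_1\le\cdots\le\lambda_n$ be positive integers. Set $G=Z_{p^{\lambda_1}}\times\cdots\times Z_{p^{\lambda_n}}$ and $G'=Z_{q^{\lambda_1}}\times\cdots\times Z_{q^{\lambda_n}}$. Then $\mathrm{Char}(G)\cong\mathrm{Char}(G')$.
   Context: $\mathrm{Char}(G)$ denotes the lattice of characteristic subgroups of $G$. *)

theory Defs
  imports "HOL-Algebra.Algebra"
begin

definition prime_power_type_group :: "nat \<Rightarrow> nat list \<Rightarrow> (nat \<Rightarrow> int) monoid" where
  "prime_power_type_group p lam =
     product_group {..<length lam} (\<lambda>i. integer_mod_group (p ^ (lam ! i)))"

definition characteristic :: "'a set \<Rightarrow> ('a, 'b) monoid_scheme \<Rightarrow> bool" where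
  "characteristic H G \<longleftrightarrow> subgroup H G \<and> (\<forall>\<phi> \<in> auto G. \<phi> ` H = H)"

definition Char :: "('a, 'b) monoid_scheme \<Rightarrow> 'a set set" where
  "Char G = {H. characteristic H G}"

text \<open>Lattice isomorphism of two lattices of sets ordered by inclusion
  (an order isomorphism, which for lattices is the same as a lattice isomorphism).\<close>
definition lattice_iso_sets :: "'a set set \<Rightarrow> 'b set set \<Rightarrow> bool" where
  "lattice_iso_sets L M \<longleftrightarrow>
     (\<exists>f. bij_betw f L M \<and> (\<forall>H\<in>L. \<forall>K\<in>L. H \<subseteq> K \<longleftrightarrow> f H \<subseteq> f K))"

end

theory Submission
  imports Defs
begin



definition good_tuples :: "nat list \<Rightarrow> (nat \<Rightarrow> nat) set" where
  "good_tuples lam = {a \<in> PiE {..<length lam} (\<lambda>i. {0..lam!i}).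
      \<forall>i<length lam. \<forall>j<length lam. a j \<le> a i + (lam!j - lam!i)}"

locale ppg =
  fixes p :: nat and lam :: "nat list"
  assumes p_prime: "Factorial_Ring.prime p"
begin

abbreviation "n \<equiv> length lam"
definition M :: "nat \<Rightarrow> int" where "M i = int p ^ (lam ! i)"
abbreviation "G \<equiv> prime_power_type_group p lam"

lemma p_gt1: "int p > 1" using p_prime prime_gt_1_nat by auto
lemma M_pos: "M i > 0" using p_gt1 by (simp add: M_def)

lemma carrierG: "carrier G = PiE {..<n} (\<lambda>i. {0..<M i})"
  using p_gt1 by (simp add: prime_power_type_group_def carrier_integer_mod_group M_def)

lemma multG: "x \<otimes>\<^bsub>G\<^esub> y = (\<lambda>i\<in>{..<n}. (x i + y i) mod M i)"
  by (simp add: prime_power_type_group_def M_def)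

lemma oneG: "\<one>\<^bsub>G\<^esub> = (\<lambda>i\<in>{..<n}. 0)"
  by (simp add: prime_power_type_group_def)

lemma groupG: "group G"
  by (simp add: prime_power_type_group_def)

lemma commG: "comm_group G"
  unfolding prime_power_type_group_def
  by (rule group.group_comm_groupI) (auto simp: PiE_iff add.commute)

lemma invG: assumes "x \<in> carrier G" shows "inv\<^bsub>G\<^esub> x = (\<lambda>i\<in>{..<n}. (- x i) mod M i)"
proof -
  have x: "x \<in> (\<Pi>\<^sub>E i\<in>{..<n}. carrier (integer_mod_group (p ^ lam ! i)))"
    using assms by (simp add: prime_power_type_group_def)
  show ?thesis
    unfolding prime_power_type_group_def
    apply (subst inv_product_group[OF x], simp)
    apply (rule restrict_ext)
    using x by (auto simp: M_def PiE_iff)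
qed

lemma finG: "finite (carrier G)"
  by (simp add: carrierG finite_PiE)

lemma powG: "x \<in> carrier G \<Longrightarrow> x [^]\<^bsub>G\<^esub> (t::nat) = (\<lambda>i\<in>{..<n}. (int t * x i) mod M i)"
proof (induction t)
  case 0
  then show ?case by (auto simp: oneG carrierG PiE_iff intro!: ext)
next
  case (Suc t)
  then show ?case
    by (auto simp: multG carrierG PiE_iff mod_add_left_eq mod_add_right_eq distrib_right add.commute intro!: ext)
qed

definition single :: "nat \<Rightarrow> int \<Rightarrow> (nat \<Rightarrow> int)" where
  "single i y = (\<lambda>k\<in>{..<n}. if k = i then y mod M i else 0)"

lemma single_carrier: "single i y \<in> carrier G"
  using M_pos by (auto simp: single_def carrierG)

lemma single_mod: "single i (y mod M i) = single i y"
  unfolding single_def by (rule restrict_ext) simp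

lemma single_pow: "single i y [^]\<^bsub>G\<^esub> (t::nat) = single i (int t * y)"
  by (subst powG[OF single_carrier]) (auto simp: single_def mod_mult_right_eq intro!: ext)

lemma single_zero: "single i 0 = \<one>\<^bsub>G\<^esub>"
  by (auto simp: single_def oneG)

lemma single_M: "single i (M i) = \<one>\<^bsub>G\<^esub>"
  by (metis mod_self single_mod single_zero)

definition trunc :: "(nat \<Rightarrow> int) \<Rightarrow> nat \<Rightarrow> (nat \<Rightarrow> int)" where
  "trunc x k = (\<lambda>i\<in>{..<n}. if i < k then x i else 0)"

lemma trunc0: "trunc x 0 = \<one>\<^bsub>G\<^esub>"
  by (auto simp: trunc_def oneG)

lemma trunc_n: "x \<in> carrier G \<Longrightarrow> trunc x n = x"
  by (auto simp: trunc_def carrierG PiE_iff extensional_def intro!: ext)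

lemma trunc_Suc: "x \<in> carrier G \<Longrightarrow> k < n \<Longrightarrow> trunc x (Suc k) = trunc x k \<otimes>\<^bsub>G\<^esub> single k (x k)"
  by (auto simp: trunc_def multG single_def carrierG PiE_iff intro!: ext)

lemma trunc_carrier: "x \<in> carrier G \<Longrightarrow> trunc x k \<in> carrier G"
  using M_pos by (auto simp: trunc_def carrierG PiE_iff)

lemma single_cong: "y mod M i = z mod M i \<Longrightarrow> single i y = single i z"
  by (metis single_mod)

lemma subgroup_pow: "subgroup H G \<Longrightarrow> x \<in> H \<Longrightarrow> x [^]\<^bsub>G\<^esub> (t::nat) \<in> H"
  by (induction t) (auto simp: subgroup.one_closed subgroup.m_closed)

lemma single_as_pow: "0 \<le> y \<Longrightarrow> single k y = single k 1 [^]\<^bsub>G\<^esub> nat y"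
  by (simp add: single_pow)

end



lemma dvd_pow_aux:
  fixes q :: int
  assumes "q ^ lj dvd q ^ lk * c" "q \<noteq> 0"
  shows "q ^ (lj - lk) dvd c"
proof (cases "lj \<le> lk")
  case True then show ?thesis by simp
next
  case False
  then have "q ^ lj = q ^ lk * q ^ (lj - lk)"
    by (metis le_add_diff_inverse nat_le_linear power_add)
  with assms show ?thesis by simp
qed

context ppg begin

lemma mclosed: "x \<in> carrier G \<Longrightarrow> y \<in> carrier G \<Longrightarrow> x \<otimes>\<^bsub>G\<^esub> y \<in> carrier G"
  using monoid.m_closed[OF group.is_monoid[OF groupG]] by blast

definition Sp :: "(nat \<Rightarrow> nat) \<Rightarrow> (nat \<Rightarrow> int) set" where
  "Sp a = {x \<in> carrier G. \<forall>i<n. int p ^ a i dvd x i}"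

lemma hom_oneG: "\<phi> \<in> hom G G \<Longrightarrow> \<phi> \<one>\<^bsub>G\<^esub> = \<one>\<^bsub>G\<^esub>"
  using hom_one groupG by blast

lemma hom_single_one:
  assumes phi: "\<phi> \<in> hom G G" and k: "k < n" and j: "j < n"
  shows "int p ^ (lam!j - lam!k) dvd \<phi> (single k 1) j"
proof -
  have e: "single k 1 \<in> carrier G" by (rule single_carrier)
  have pe: "\<phi> (single k 1) \<in> carrier G" using phi e by (auto simp: hom_def)
  have "\<phi> (single k 1 [^]\<^bsub>G\<^esub> nat (M k)) = \<phi> (single k 1) [^]\<^bsub>G\<^esub> nat (M k)"
    using hom_nat_pow[OF phi e groupG groupG] .
  moreover have "single k 1 [^]\<^bsub>G\<^esub> nat (M k) = \<one>\<^bsub>G\<^esub>"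
    using M_pos[of k] by (simp add: single_pow single_M)
  ultimately have "\<phi> (single k 1) [^]\<^bsub>G\<^esub> nat (M k) = \<one>\<^bsub>G\<^esub>"
    using hom_oneG[OF phi] by simp
  then have "(\<phi> (single k 1) [^]\<^bsub>G\<^esub> nat (M k)) j = 0"
    using j by (simp add: oneG)
  then have "M k * \<phi> (single k 1) j mod M j = 0"
    using j M_pos[of k] by (simp add: powG[OF pe])
  then have "M j dvd M k * \<phi> (single k 1) j" by presburger
  then show ?thesis
    using p_gt1 by (intro dvd_pow_aux) (auto simp: M_def)
qed

lemma good_le: "a \<in> good_tuples lam \<Longrightarrow> i < n \<Longrightarrow> a i \<le> lam ! i"
  by (auto simp: good_tuples_def PiE_iff)

lemma good_rel: "a \<in> good_tuples lam \<Longrightarrow> i < n \<Longrightarrow> j < n \<Longrightarrow> a j \<le> a i + (lam!j - lam!i)"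
  by (auto simp: good_tuples_def)

lemma pa_dvd_M: "a \<le> lam ! i \<Longrightarrow> int p ^ a dvd M i"
  unfolding M_def by (rule le_imp_power_dvd)

lemma hom_pres:
  assumes phi: "\<phi> \<in> hom G G" and a: "a \<in> good_tuples lam" and x: "x \<in> Sp a"
  shows "\<phi> x \<in> Sp a"
proof -
  have xc: "x \<in> carrier G" and xd: "\<And>i. i < n \<Longrightarrow> int p ^ a i dvd x i"
    using x by (auto simp: Sp_def)
  have "\<forall>j<n. int p ^ a j dvd \<phi> (trunc x k) j" if "k \<le> n" for k
    using that
  proof (induction k)
    case 0
    have "\<phi> (trunc x 0) = \<one>\<^bsub>G\<^esub>" by (simp add: trunc0 hom_oneG[OF phi])
    then show ?case by (simp add: oneG)
  next
    case (Suc k)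
    then have k: "k < n" by simp
    have tc: "trunc x k \<in> carrier G" using xc by (rule trunc_carrier)
    have xk: "0 \<le> x k" using xc k by (auto simp: carrierG PiE_iff)
    have eq1: "\<phi> (trunc x (Suc k)) = \<phi> (trunc x k) \<otimes>\<^bsub>G\<^esub> \<phi> (single k (x k))"
      using trunc_Suc[OF xc k] phi tc single_carrier by (simp add: hom_def)
    have eq2: "\<phi> (single k (x k)) = \<phi> (single k 1) [^]\<^bsub>G\<^esub> nat (x k)"
      using single_as_pow[OF xk] hom_nat_pow[OF phi single_carrier groupG groupG] by simp
    have pe: "\<phi> (single k 1) \<in> carrier G" using phi single_carrier by (auto simp: hom_def)
    show ?case
    proof (intro allI impI)
      fix j assume j: "j < n"
      have ajl: "a j \<le> lam ! j" using good_le[OF a j] .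
      have d1: "int p ^ a j dvd \<phi> (trunc x k) j" using Suc k j by simp
      have "int p ^ (a k + (lam!j - lam!k)) dvd x k * \<phi> (single k 1) j"
        unfolding power_add using xd[OF k] hom_single_one[OF phi k j] by (rule mult_dvd_mono)
      then have d2: "int p ^ a j dvd x k * \<phi> (single k 1) j"
        using good_rel[OF a k j] by (meson dvd_trans le_imp_power_dvd)
      have "(\<phi> (trunc x (Suc k))) j = (\<phi> (trunc x k) j + (x k * \<phi> (single k 1) j) mod M j) mod M j"
        using j xk by (simp add: eq1 eq2 multG powG[OF pe])
      moreover have "int p ^ a j dvd (\<phi> (trunc x k) j + (x k * \<phi> (single k 1) j) mod M j) mod M j"
        using d1 d2 pa_dvd_M[OF ajl] by (simp add: dvd_mod_iff)
      ultimately show "int p ^ a j dvd \<phi> (trunc x (Suc k)) j" by simp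
    qed
  qed
  from this[of n] have "\<forall>j<n. int p ^ a j dvd \<phi> x j" by (simp add: trunc_n[OF xc])
  moreover have "\<phi> x \<in> carrier G" using phi xc by (auto simp: hom_def)
  ultimately show ?thesis by (simp add: Sp_def)
qed

lemma Sp_subgroup:
  assumes a: "\<And>i. i < n \<Longrightarrow> a i \<le> lam ! i"
  shows "subgroup (Sp a) G"
proof (rule group.subgroupI[OF groupG])
  show "Sp a \<subseteq> carrier G" by (auto simp: Sp_def)
  show "Sp a \<noteq> {}"
    using M_pos by (auto simp: Sp_def oneG carrierG intro!: exI[of _ "\<one>\<^bsub>G\<^esub>"])
  fix x y assume x: "x \<in> Sp a" and y: "y \<in> Sp a"
  have xc: "x \<in> carrier G" using x by (simp add: Sp_def)
  show "inv\<^bsub>G\<^esub> x \<in> Sp a"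
    using x group.inv_closed[OF groupG xc] a pa_dvd_M
    by (auto simp: Sp_def invG[OF xc] dvd_mod_iff)
  show "x \<otimes>\<^bsub>G\<^esub> y \<in> Sp a"
    using x y mclosed a pa_dvd_M
    by (auto simp: Sp_def multG dvd_mod_iff)
qed

lemma Sp_finite: "finite (Sp a)"
  using finG by (rule rev_finite_subset) (auto simp: Sp_def)

lemma Sp_char:
  assumes a: "a \<in> good_tuples lam"
  shows "characteristic (Sp a) G"
  unfolding characteristic_def
proof
  show "subgroup (Sp a) G" using good_le[OF a] by (intro Sp_subgroup)
  show "\<forall>\<phi>\<in>auto G. \<phi> ` Sp a = Sp a"
  proof
    fix \<phi> assume "\<phi> \<in> auto G"
    then have phi: "\<phi> \<in> hom G G" and bij: "bij_betw \<phi> (carrier G) (carrier G)"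
      by (auto simp: auto_def Bij_def)
    have "inj_on \<phi> (Sp a)"
      using bij by (rule inj_on_subset[OF bij_betw_imp_inj_on]) (auto simp: Sp_def)
    moreover have "\<phi> ` Sp a \<subseteq> Sp a" using hom_pres[OF phi a] by auto
    ultimately show "\<phi> ` Sp a = Sp a" using Sp_finite endo_inj_surj by blast
  qed
qed

end



lemma mod_mult_aux:
  fixes c s m mi :: int
  assumes "m dvd c * mi"
  shows "(c * (s mod mi)) mod m = (c * s) mod m"
proof -
  obtain k where k: "c * mi = m * k" using assms by (auto elim: dvdE)
  have e: "c * s = c * (s mod mi) + m * (k * (s div mi))"
  proof -
    have "c * s = c * (mi * (s div mi) + s mod mi)" by (simp only: mult_div_mod_eq)
    also have "\<dots> = c * (s mod mi) + (c * mi) * (s div mi)"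
      by (simp only: distrib_left mult.assoc add.commute)
    also have "\<dots> = c * (s mod mi) + m * (k * (s div mi))" by (simp only: k mult.assoc)
    finally show ?thesis .
  qed
  have "(c * s) mod m = (c * (s mod mi)) mod m" unfolding e by (rule mod_mult_self2)
  then show ?thesis by simp
qed

context ppg begin

definition tau :: "nat \<Rightarrow> nat \<Rightarrow> int \<Rightarrow> (nat \<Rightarrow> int) \<Rightarrow> (nat \<Rightarrow> int)" where
  "tau i j c x = (if x \<in> carrier G then
     (\<lambda>k\<in>{..<n}. if k = j then (x j + c * x i) mod M j else x k) else undefined)"

lemma in_range_eq: "0 \<le> a \<Longrightarrow> a < m \<Longrightarrow> 0 \<le> b \<Longrightarrow> b < m \<Longrightarrow> (m::int) dvd a - b \<Longrightarrow> a = b"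
proof -
  assume "0 \<le> a" "a < m" "0 \<le> b" "b < m" "m dvd a - b"
  then have "a mod m = b mod m" by (intro mod_eq_dvd_iff[THEN iffD2])
  moreover have "a mod m = a" using \<open>0 \<le> a\<close> \<open>a < m\<close> by (rule mod_pos_pos_trivial)
  moreover have "b mod m = b" using \<open>0 \<le> b\<close> \<open>b < m\<close> by (rule mod_pos_pos_trivial)
  ultimately show "a = b" by simp
qed

lemma tau_carrier: "x \<in> carrier G \<Longrightarrow> j < n \<Longrightarrow> tau i j c x \<in> carrier G"
  using M_pos by (auto simp: tau_def carrierG PiE_iff)

lemma tau_auto:
  assumes i: "i < n" and j: "j < n" and dv: "M j dvd c * M i"
    and cond: "i \<noteq> j \<or> c = -2"
  shows "tau i j c \<in> auto G"
proof -
  have hom: "tau i j c \<in> hom G G"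
  proof (unfold hom_def, intro CollectI conjI ballI)
    show "tau i j c \<in> carrier G \<rightarrow> carrier G" using tau_carrier j by auto
    fix x y assume x: "x \<in> carrier G" and y: "y \<in> carrier G"
    have xy: "x \<otimes>\<^bsub>G\<^esub> y \<in> carrier G" using x y mclosed by blast
    have key: "((x j + y j) mod M j + c * ((x i + y i) mod M i)) mod M j
        = ((x j + c * x i) mod M j + (y j + c * y i) mod M j) mod M j"
    proof -
      have "((x j + y j) mod M j + c * ((x i + y i) mod M i)) mod M j
          = ((x j + y j) + c * ((x i + y i) mod M i)) mod M j"
        by (rule mod_add_left_eq)
      also have "\<dots> = ((x j + y j) + (c * ((x i + y i) mod M i)) mod M j) mod M j"
        by (rule mod_add_right_eq[symmetric])
      also have "\<dots> = ((x j + y j) + (c * (x i + y i)) mod M j) mod M j"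
        by (simp only: mod_mult_aux[OF dv])
      also have "\<dots> = ((x j + y j) + (c * (x i + y i))) mod M j"
        by (rule mod_add_right_eq)
      also have "\<dots> = ((x j + c * x i) + (y j + c * y i)) mod M j"
        by (simp add: algebra_simps)
      also have "\<dots> = ((x j + c * x i) mod M j + (y j + c * y i) mod M j) mod M j"
        by (rule mod_add_eq[symmetric])
      finally show ?thesis .
    qed
    show "tau i j c (x \<otimes>\<^bsub>G\<^esub> y) = tau i j c x \<otimes>\<^bsub>G\<^esub> tau i j c y"
    proof -
      have T: "\<And>z. z \<in> carrier G \<Longrightarrow> tau i j c z = (\<lambda>k\<in>{..<n}. if k = j then (z j + c * z i) mod M j else z k)"
        by (simp add: tau_def)
      show ?thesis
        unfolding T[OF xy] T[OF x] T[OF y]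
      proof (subst (3) multG, rule restrict_ext)
        fix k assume k: "k \<in> {..<n}"
        show "(if k = j then ((x \<otimes>\<^bsub>G\<^esub> y) j + c * (x \<otimes>\<^bsub>G\<^esub> y) i) mod M j else (x \<otimes>\<^bsub>G\<^esub> y) k) =
           ((\<lambda>k\<in>{..<n}. if k = j then (x j + c * x i) mod M j else x k) k +
            (\<lambda>k\<in>{..<n}. if k = j then (y j + c * y i) mod M j else y k) k) mod M k"
          using k i j key by (simp add: multG)
      qed
    qed
  qed
  have inj: "inj_on (tau i j c) (carrier G)"
  proof (rule inj_onI)
    fix x y assume x: "x \<in> carrier G" and y: "y \<in> carrier G" and eq: "tau i j c x = tau i j c y"
    have rx: "\<And>k. k < n \<Longrightarrow> 0 \<le> x k \<and> x k < M k" and ry: "\<And>k. k < n \<Longrightarrow> 0 \<le> y k \<and> y k < M k"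
      using x y by (auto simp: carrierG PiE_iff)
    have oth: "x k = y k" if "k < n" "k \<noteq> j" for k
      using fun_cong[OF eq, of k] that x y by (simp add: tau_def)
    have ej: "(x j + c * x i) mod M j = (y j + c * y i) mod M j"
      using fun_cong[OF eq, of j] j x y by (simp add: tau_def)
    have "x j = y j"
    proof (cases "i = j")
      case False
      with oth i have "x i = y i" by simp
      with ej have "M j dvd (x j + c * x i) - (y j + c * x i)" by (simp add: mod_eq_dvd_iff)
      then have "M j dvd x j - y j" by simp
      then show ?thesis using rx[OF j] ry[OF j] in_range_eq by blast
    next
      case True
      with cond have c: "c = -2" by simp
      with ej True have "M j dvd (x j + -2 * x j) - (y j + -2 * y j)" by (simp add: mod_eq_dvd_iff)
      then have "M j dvd -(x j - y j)" by (simp add: algebra_simps)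
      then have "M j dvd x j - y j" by (simp only: dvd_minus_iff)
      then show ?thesis using rx[OF j] ry[OF j] in_range_eq by blast
    qed
    then have "\<And>k. k < n \<Longrightarrow> x k = y k" using oth by metis
    then show "x = y"
    proof (intro ext)
      fix k show "x k = y k"
      proof (cases "k < n")
        case True then show ?thesis using \<open>\<And>k. k < n \<Longrightarrow> x k = y k\<close> by blast
      next
        case False then show ?thesis using x y by (auto simp: carrierG PiE_iff extensional_def)
      qed
    qed
  qed
  have "tau i j c ` carrier G = carrier G"
  proof (rule endo_inj_surj[OF finG _ inj])
    show "tau i j c ` carrier G \<subseteq> carrier G" using tau_carrier j by blast
  qed
  then have "bij_betw (tau i j c) (carrier G) (carrier G)" using inj by (simp add: bij_betw_def)
  moreover have "tau i j c \<in> extensional (carrier G)" by (simp add: tau_def extensional_def)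
  ultimately show ?thesis using hom by (simp add: auto_def Bij_def)
qed

lemma tau_diff:
  assumes x: "x \<in> carrier G" and j: "j < n"
  shows "tau i j c x \<otimes>\<^bsub>G\<^esub> inv\<^bsub>G\<^esub> x = single j (c * x i)"
proof -
  have tc: "tau i j c x \<in> carrier G" using tau_carrier[OF x j] .
  show ?thesis
    unfolding multG invG[OF x] single_def
  proof (rule restrict_ext)
    fix k assume k: "k \<in> {..<n}"
    show "(tau i j c x k + (\<lambda>i\<in>{..<n}. - x i mod M i) k) mod M k =
          (if k = j then c * x i mod M j else 0)"
    proof (cases "k = j")
      case True
      have "((x j + c * x i) mod M j + - x j mod M j) mod M j = (x j + c * x i + - x j) mod M j"
        by (rule mod_add_eq)
      then show ?thesis using True k x by (simp add: tau_def)
    next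
      case False
      have "(x k + - x k mod M k) mod M k = (x k + - x k) mod M k"
        by (rule mod_add_right_eq)
      then show ?thesis using False k x by (simp add: tau_def)
    qed
  qed
qed

lemma char_single:
  assumes H: "characteristic H G" and h: "h \<in> H" and i: "i < n" and j: "j < n"
    and dv: "M j dvd c * M i" and cond: "i \<noteq> j \<or> c = -2"
  shows "single j (c * h i) \<in> H"
proof -
  have sg: "subgroup H G" and inv: "tau i j c ` H = H"
    using H tau_auto[OF i j dv cond] by (auto simp: characteristic_def)
  have hc: "h \<in> carrier G" using subgroup.mem_carrier[OF sg h] .
  have "tau i j c h \<in> H" using inv h by blast
  moreover have "inv\<^bsub>G\<^esub> h \<in> H" by (rule subgroup.m_inv_closed[OF sg h])
  ultimately have "tau i j c h \<otimes>\<^bsub>G\<^esub> inv\<^bsub>G\<^esub> h \<in> H" by (rule subgroup.m_closed[OF sg])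
  then show ?thesis using tau_diff[OF hc j] by simp
qed

lemma char_proj:
  assumes H: "characteristic H G" and h: "h \<in> H" and i: "i < n" and p2: "p \<noteq> 2"
  shows "single i (h i) \<in> H"
proof -
  have sg: "subgroup H G" using H by (simp add: characteristic_def)
  have "M i dvd -2 * M i" by simp
  from char_single[OF H h i i this] have s: "single i (-2 * h i) \<in> H" by simp
  have "p > 2" using prime_ge_2_nat[OF p_prime] p2 by linarith
  then have "odd p" using p_prime by (intro prime_odd_nat)
  then have oddM: "odd (M i)" by (simp add: M_def)
  define t where "t = nat ((M i - 1) div 2)"
  obtain k where k: "M i = 2 * k + 1" using oddM by (auto elim: oddE)
  have "k \<ge> 0" using M_pos[of i] k by simp
  then have t2: "2 * int t = M i - 1" unfolding t_def using k by simp
  have "single i (-2 * h i) [^]\<^bsub>G\<^esub> t \<in> H" by (rule subgroup_pow[OF sg s])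
  moreover have "single i (-2 * h i) [^]\<^bsub>G\<^esub> t = single i (h i)"
  proof -
    have "int t * (-2 * h i) = -(2 * int t) * h i" by (simp add: algebra_simps)
    also have "\<dots> = (1 - M i) * h i" using t2 by simp
    also have "\<dots> = h i + M i * (- h i)" by (simp add: algebra_simps)
    finally have "(int t * (-2 * h i)) mod M i = (h i + M i * (- h i)) mod M i" by simp
    then have "(int t * (-2 * h i)) mod M i = h i mod M i" by (simp only: mod_mult_self2)
    then show ?thesis unfolding single_pow by (rule single_cong)
  qed
  ultimately show ?thesis by simp
qed

end



context ppg begin

lemma pow_dvd_pow_le: "int p ^ b dvd int p ^ a \<Longrightarrow> b \<le> a"
  using p_gt1 dvd_power_iff[of "int p" b a] by auto

lemma pow_mod_small: "x < l \<Longrightarrow> int p ^ x mod int p ^ l = int p ^ x"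
  using p_gt1 by (intro mod_pos_pos_trivial) (auto intro: power_strict_increasing)

definition aH :: "(nat \<Rightarrow> int) set \<Rightarrow> nat \<Rightarrow> nat" where
  "aH H i = (LEAST k. single i (int p ^ k) \<in> H)"

lemma aH_props:
  assumes sg: "subgroup H G"
  shows "single i (int p ^ aH H i) \<in> H" "aH H i \<le> lam ! i"
proof -
  have "single i (int p ^ (lam ! i)) \<in> H"
    using single_M[of i] subgroup.one_closed[OF sg] by (simp add: M_def)
  then show "single i (int p ^ aH H i) \<in> H" "aH H i \<le> lam ! i"
    unfolding aH_def by (auto intro: LeastI Least_le)
qed

lemma aH_suff:
  assumes sg: "subgroup H G" and d: "int p ^ aH H i dvd y"
  shows "single i y \<in> H"
proof -
  obtain z where y: "y = int p ^ aH H i * z" using d by auto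
  have nn: "0 \<le> z mod M i" using M_pos[of i] by simp
  have "single i (int p ^ aH H i) [^]\<^bsub>G\<^esub> nat (z mod M i) \<in> H"
    using subgroup_pow[OF sg aH_props(1)[OF sg]] .
  moreover have "single i (int p ^ aH H i) [^]\<^bsub>G\<^esub> nat (z mod M i) = single i y"
    unfolding single_pow using nn y
    by (intro single_cong) (simp add: mod_mult_left_eq mod_mult_right_eq mult.commute)
  ultimately show ?thesis by simp
qed

lemma aH_nec:
  assumes sg: "subgroup H G" and s: "single i y \<in> H" and y0: "0 \<le> y" and yM: "y < M i"
  shows "int p ^ aH H i dvd y"
proof (cases "y = 0")
  case True then show ?thesis by simp
next
  case False
  have nu: "\<not> is_unit (int p)" using p_gt1 by simp
  obtain u where yu: "y = int p ^ multiplicity (int p) y * u" and pu: "\<not> int p dvd u"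
    using multiplicity_decompose'[OF False nu] by blast
  define v where "v = multiplicity (int p) y"
  have pp: "Factorial_Ring.prime (int p)" using p_prime by simp
  have "coprime (int p) u" using pp pu by (simp add: prime_imp_coprime)
  then have cop: "coprime u (M i)" by (simp add: M_def coprime_commute)
  obtain w where w: "(w * u) mod M i = 1 mod M i"
  proof -
    obtain a b where "bezout_coefficients u (M i) = (a, b)" by (cases "bezout_coefficients u (M i)")
    then have "a * u + b * M i = gcd u (M i)" by (rule bezout_coefficients)
    then have "a * u + b * M i = 1" using cop by simp
    then have "(a * u) mod M i = 1 mod M i" by (metis mod_mult_self1)
    then show ?thesis using that by blast
  qed
  have nn: "0 \<le> w mod M i" using M_pos[of i] by simp
  have "single i y [^]\<^bsub>G\<^esub> nat (w mod M i) \<in> H" by (rule subgroup_pow[OF sg s])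
  moreover have "single i y [^]\<^bsub>G\<^esub> nat (w mod M i) = single i (int p ^ v)"
  proof -
    have wy: "w * y = int p ^ v * (w * u)" using yu unfolding v_def[symmetric] by (simp add: algebra_simps)
    have "(w mod M i * y) mod M i = (int p ^ v * (w * u)) mod M i"
      by (simp only: mod_mult_left_eq wy)
    also have "\<dots> = (int p ^ v * ((w * u) mod M i)) mod M i" by (simp add: mod_mult_right_eq)
    also have "\<dots> = (int p ^ v) mod M i" using w by (simp add: mod_mult_right_eq)
    finally show ?thesis unfolding single_pow using nn by (intro single_cong) simp
  qed
  ultimately have "single i (int p ^ v) \<in> H" by simp
  then have "aH H i \<le> v" unfolding aH_def by (rule Least_le)
  then have "int p ^ aH H i dvd int p ^ v" by (rule le_imp_power_dvd)
  also have "int p ^ v dvd y" unfolding v_def by (rule multiplicity_dvd)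
  finally show ?thesis .
qed

definition aR :: "(nat \<Rightarrow> int) set \<Rightarrow> nat \<Rightarrow> nat" where
  "aR H = (\<lambda>i\<in>{..<n}. aH H i)"

lemma char_is_Sp:
  assumes H: "characteristic H G" and p2: "p \<noteq> 2"
  shows "aR H \<in> good_tuples lam" "H = Sp (aR H)"
proof -
  have sg: "subgroup H G" using H by (simp add: characteristic_def)
  show "H = Sp (aR H)"
  proof
    show "H \<subseteq> Sp (aR H)"
    proof
      fix h assume h: "h \<in> H"
      have hc: "h \<in> carrier G" using subgroup.mem_carrier[OF sg h] .
      have "int p ^ aH H i dvd h i" if i: "i < n" for i
        using aH_nec[OF sg char_proj[OF H h i p2]] hc i by (auto simp: carrierG PiE_iff)
      then show "h \<in> Sp (aR H)" using hc by (simp add: Sp_def aR_def)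
    qed
    show "Sp (aR H) \<subseteq> H"
    proof
      fix x assume x: "x \<in> Sp (aR H)"
      have xc: "x \<in> carrier G" using x by (simp add: Sp_def)
      have "trunc x k \<in> H" if "k \<le> n" for k
        using that
      proof (induction k)
        case 0 then show ?case using subgroup.one_closed[OF sg] by (simp add: trunc0)
      next
        case (Suc k)
        then have k: "k < n" by simp
        have "int p ^ aH H k dvd x k" using x k by (simp add: Sp_def aR_def)
        then have "single k (x k) \<in> H" by (rule aH_suff[OF sg])
        then show ?case using Suc subgroup.m_closed[OF sg] by (simp add: trunc_Suc[OF xc k])
      qed
      then show "x \<in> H" using trunc_n[OF xc] by (metis order_refl)
    qed
  qed
  show "aR H \<in> good_tuples lam"
    unfolding good_tuples_def
  proof (intro CollectI conjI allI impI)
    show "aR H \<in> PiE {..<n} (\<lambda>i. {0..lam!i})"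
      using aH_props(2)[OF sg] by (auto simp: aR_def)
    fix i j assume i: "i < n" and j: "j < n"
    show "aR H j \<le> aR H i + (lam!j - lam!i)"
    proof (cases "i = j")
      case True then show ?thesis by simp
    next
      case False
      let ?c = "int p ^ (lam!j - lam!i)"
      let ?ai = "aH H i" and ?aj = "aH H j"
      have dv: "M j dvd ?c * M i" unfolding M_def power_add[symmetric]
        by (rule le_imp_power_dvd) simp
      have hs: "single i (int p ^ ?ai) \<in> H" by (rule aH_props(1)[OF sg])
      have hi: "single i (int p ^ ?ai) i = int p ^ ?ai mod M i" using i by (simp add: single_def)
      have "single j (?c * (int p ^ ?ai mod M i)) \<in> H"
        using char_single[OF H hs i j dv] False hi by simp
      then have "single j ((?c * (int p ^ ?ai mod M i)) mod M j) \<in> H" by (simp add: single_mod)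
      then have d: "int p ^ ?aj dvd (?c * (int p ^ ?ai mod M i)) mod M j"
        using M_pos[of j] by (intro aH_nec[OF sg]) auto
      have ajl: "?aj \<le> lam!j" using aH_props(2)[OF sg] .
      have "?aj \<le> ?ai + (lam!j - lam!i)"
      proof (cases "?ai < lam!i")
        case False then show ?thesis using ajl by linarith
      next
        case True
        then have e1: "int p ^ ?ai mod M i = int p ^ ?ai" by (simp add: M_def pow_mod_small)
        have e2: "?c * int p ^ ?ai = int p ^ (?ai + (lam!j - lam!i))" by (simp add: power_add)
        show ?thesis
        proof (cases "?ai + (lam!j - lam!i) < lam!j")
          case False then show ?thesis using ajl by linarith
        next
          case True
          then have "int p ^ ?aj dvd int p ^ (?ai + (lam!j - lam!i))"
            using d by (simp add: e1 e2 M_def pow_mod_small)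
          then show ?thesis by (rule pow_dvd_pow_le)
        qed
      qed
      then show ?thesis using i j by (simp add: aR_def)
    qed
  qed
qed

lemma Sp_subset_iff:
  assumes a: "\<And>i. i < n \<Longrightarrow> a i \<le> lam ! i" and b: "\<And>i. i < n \<Longrightarrow> b i \<le> lam ! i"
  shows "Sp a \<subseteq> Sp b \<longleftrightarrow> (\<forall>i<n. b i \<le> a i)"
proof
  assume sub: "Sp a \<subseteq> Sp b"
  show "\<forall>i<n. b i \<le> a i"
  proof (intro allI impI)
    fix i assume i: "i < n"
    have "single i (int p ^ a i) \<in> Sp a"
      using single_carrier pa_dvd_M[OF a[OF i]] by (auto simp: Sp_def single_def dvd_mod_iff)
    then have "single i (int p ^ a i) \<in> Sp b" using sub by blast
    then have d: "int p ^ b i dvd int p ^ a i mod M i" using i by (force simp: Sp_def single_def)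
    show "b i \<le> a i"
    proof (cases "a i < lam ! i")
      case False then show ?thesis using b[OF i] by linarith
    next
      case True
      then show ?thesis using d by (simp add: M_def pow_mod_small pow_dvd_pow_le)
    qed
  qed
next
  assume "\<forall>i<n. b i \<le> a i"
  then show "Sp a \<subseteq> Sp b"
    by (auto simp: Sp_def intro: dvd_trans[OF le_imp_power_dvd])
qed

lemma Char_eq:
  assumes p2: "p \<noteq> 2"
  shows "Char G = Sp ` good_tuples lam"
  using char_is_Sp[OF _ p2] Sp_char unfolding Char_def by auto

end



lemma (in ppg) Sp_inj: "inj_on Sp (good_tuples lam)"
proof (rule inj_onI)
  fix a b assume a: "a \<in> good_tuples lam" and b: "b \<in> good_tuples lam" and e: "Sp a = Sp b"
  have "\<forall>i<n. b i \<le> a i" "\<forall>i<n. a i \<le> b i"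
    using Sp_subset_iff[of a b] Sp_subset_iff[of b a] good_le[OF a] good_le[OF b] e by auto
  then have "\<forall>i<n. a i = b i" by (meson antisym)
  then show "a = b" using a b unfolding good_tuples_def
    by (auto simp: PiE_iff extensional_def intro!: ext) (metis lessThan_iff)
qed

lemma (in ppg) Sp_le_iff: "a \<in> good_tuples lam \<Longrightarrow> b \<in> good_tuples lam \<Longrightarrow>
   Sp a \<subseteq> Sp b \<longleftrightarrow> (\<forall>i<length lam. b i \<le> a i)"
  using Sp_subset_iff good_le by blast

theorem mainTheorem7:
  fixes p q :: nat and lam :: "nat list"
  assumes "Factorial_Ring.prime p" and "p \<noteq> 2" and "Factorial_Ring.prime q" and "q \<noteq> 2"
    and "sorted lam" and "\<forall>l \<in> set lam. 0 < l"
  shows "lattice_iso_sets (Char (prime_power_type_group p lam))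
                          (Char (prime_power_type_group q lam))"
proof -
  interpret P: ppg p lam by unfold_locales (rule assms(1))
  interpret Q: ppg q lam by unfold_locales (rule assms(3))
  let ?A = "good_tuples lam"
  define f where "f = (\<lambda>H. Q.Sp (inv_into ?A P.Sp H))"
  have bP: "bij_betw P.Sp ?A (P.Sp ` ?A)" using P.Sp_inj by (simp add: bij_betw_imageI)
  have bQ: "bij_betw Q.Sp ?A (Q.Sp ` ?A)" using Q.Sp_inj by (simp add: bij_betw_imageI)
  have "bij_betw f (P.Sp ` ?A) (Q.Sp ` ?A)"
    unfolding f_def using bij_betw_trans[OF bij_betw_inv_into[OF bP] bQ] by (simp add: comp_def)
  moreover have "\<forall>H\<in>P.Sp ` ?A. \<forall>K\<in>P.Sp ` ?A. H \<subseteq> K \<longleftrightarrow> f H \<subseteq> f K"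
  proof (intro ballI)
    fix H K assume "H \<in> P.Sp ` ?A" "K \<in> P.Sp ` ?A"
    then obtain a b where a: "a \<in> ?A" "H = P.Sp a" and b: "b \<in> ?A" "K = P.Sp b" by blast
    have fa: "f H = Q.Sp a" using a P.Sp_inj by (simp add: f_def)
    have fb: "f K = Q.Sp b" using b P.Sp_inj by (simp add: f_def)
    show "H \<subseteq> K \<longleftrightarrow> f H \<subseteq> f K"
      using a b fa fb P.Sp_le_iff Q.Sp_le_iff by simp
  qed
  ultimately show ?thesis
    unfolding lattice_iso_sets_def P.Char_eq[OF assms(2)] Q.Char_eq[OF assms(4)] by blast
qed



end
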